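(* Let $D$ be the automaton built from complete DFAs $A,B,C$ as described in the context. For every state $(i,S)$ of $D$, the state $(i,\mathrm{Sat}(S))$ is equivalent to $(i,S)$.
   Context: Let $A=(\Sigma,Q_A=\{0,\dots,m-1\},0,F_A,\cdot)$, $B=(\Sigma,Q_B=\{q_0,\dots,q_{n-1}\},q_0,F_B,\cdot)$, $C=(\Sigma,Q_C=\{r_0,\dots,r_{p-1}\},r_0,F_C,\cdot)$ be complete DFAs. $D=(\Sigma,Q_A\times 2^{Q_B\times Q_C},i_D,F_D,\cdot)$ where $i_D=(0,\emptyset)$ if $0\notin F_A$ and $i_D=(0,\{(q_0,r_0)\})$ otherwise; $(i,S)\in F_D$ iff $S$ contains a pair $(q,r)$ with exactly one of $q\in F_B$, $r\in F_C$; and for $a\in\Sigma$, $(i,S)\cdot a=(i\cdot a,S\cdot a)$ if $i\cdot a\notin F_A$ and $(i\cdot a,S\cdot a\cup\{(q_0,r_0)\})$ otherwise, with $S\cdot a=\{(q\cdot a,r\cdot a):(q,r)\in S\}$. Two states are equivalent if no word leads exactly one of them to $F_D$. A tableau $S\subseteq Q_B\times Q_C$ is saturated if whenever $(q_x,r_{x'}),(q_x,r_{y'}),(q_y,r_{y'})\in S$ then $(q_y,r_{x'})\in S$; $\mathrm{Sat}(S)$ is the smallest saturated tableau containing $S$. *)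

theory Defs
  imports Main
begin

definition complete_dfa ::
  "'s set \<Rightarrow> 'q set \<Rightarrow> 'q \<Rightarrow> 'q set \<Rightarrow> ('q \<Rightarrow> 's \<Rightarrow> 'q) \<Rightarrow> bool" where
  "complete_dfa Alph Q q0 F delta \<longleftrightarrow>
     finite Alph \<and> finite Q \<and> q0 \<in> Q \<and> F \<subseteq> Q \<and>
     (\<forall>q\<in>Q. \<forall>a\<in>Alph. delta q a \<in> Q)"

definition D_step ::
  "('qa \<Rightarrow> 's \<Rightarrow> 'qa) \<Rightarrow> 'qa set \<Rightarrow> ('qb \<Rightarrow> 's \<Rightarrow> 'qb) \<Rightarrow> 'qb \<Rightarrow>
   ('qc \<Rightarrow> 's \<Rightarrow> 'qc) \<Rightarrow> 'qc \<Rightarrow>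
   ('qa \<times> ('qb \<times> 'qc) set) \<Rightarrow> 's \<Rightarrow> ('qa \<times> ('qb \<times> 'qc) set)" where
  "D_step dA FA dB q0 dC r0 st a =
     (let i' = dA (fst st) a;
          S' = (\<lambda>(q, r). (dB q a, dC r a)) ` snd st
      in if i' \<in> FA then (i', insert (q0, r0) S') else (i', S'))"

definition D_run ::
  "('qa \<Rightarrow> 's \<Rightarrow> 'qa) \<Rightarrow> 'qa set \<Rightarrow> ('qb \<Rightarrow> 's \<Rightarrow> 'qb) \<Rightarrow> 'qb \<Rightarrow>
   ('qc \<Rightarrow> 's \<Rightarrow> 'qc) \<Rightarrow> 'qc \<Rightarrow>
   ('qa \<times> ('qb \<times> 'qc) set) \<Rightarrow> 's list \<Rightarrow> ('qa \<times> ('qb \<times> 'qc) set)" where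
  "D_run dA FA dB q0 dC r0 st w = foldl (D_step dA FA dB q0 dC r0) st w"

definition D_final :: "'qb set \<Rightarrow> 'qc set \<Rightarrow> ('qa \<times> ('qb \<times> 'qc) set) \<Rightarrow> bool" where
  "D_final FB FC st \<longleftrightarrow> (\<exists>(q, r) \<in> snd st. (q \<in> FB) \<noteq> (r \<in> FC))"

definition D_equiv ::
  "'s set \<Rightarrow> ('qa \<Rightarrow> 's \<Rightarrow> 'qa) \<Rightarrow> 'qa set \<Rightarrow> ('qb \<Rightarrow> 's \<Rightarrow> 'qb) \<Rightarrow> 'qb \<Rightarrow> 'qb set \<Rightarrow>
   ('qc \<Rightarrow> 's \<Rightarrow> 'qc) \<Rightarrow> 'qc \<Rightarrow> 'qc set \<Rightarrow>
   ('qa \<times> ('qb \<times> 'qc) set) \<Rightarrow> ('qa \<times> ('qb \<times> 'qc) set) \<Rightarrow> bool" where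
  "D_equiv Alph dA FA dB q0 FB dC r0 FC s t \<longleftrightarrow>
     (\<forall>w \<in> lists Alph.
        D_final FB FC (D_run dA FA dB q0 dC r0 s w) \<longleftrightarrow>
        D_final FB FC (D_run dA FA dB q0 dC r0 t w))"

definition saturated :: "('qb \<times> 'qc) set \<Rightarrow> bool" where
  "saturated S \<longleftrightarrow>
     (\<forall>qx qy rx ry. (qx, rx) \<in> S \<and> (qx, ry) \<in> S \<and> (qy, ry) \<in> S \<longrightarrow> (qy, rx) \<in> S)"

definition Sat :: "('qb \<times> 'qc) set \<Rightarrow> ('qb \<times> 'qc) set" where
  "Sat S = \<Inter> {T. S \<subseteq> T \<and> saturated T}"

end

theory Submission
  imports Defs
begin

lemma Sat_sub: "S \<subseteq> Sat S" unfolding Sat_def by blast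

lemma Sat_least: "S \<subseteq> T \<Longrightarrow> saturated T \<Longrightarrow> Sat S \<subseteq> T"
  unfolding Sat_def by blast

lemma Sat_saturated: "saturated (Sat S)"
  unfolding saturated_def
proof (intro allI impI)
  fix qx qy rx ry
  assume h: "(qx, rx) \<in> Sat S \<and> (qx, ry) \<in> Sat S \<and> (qy, ry) \<in> Sat S"
  show "(qy, rx) \<in> Sat S" unfolding Sat_def
  proof
    fix T assume "T \<in> {T. S \<subseteq> T \<and> saturated T}"
    hence T: "S \<subseteq> T" "saturated T" by auto
    have "Sat S \<subseteq> T" using T by (rule Sat_least)
    with h have "(qx, rx) \<in> T" "(qx, ry) \<in> T" "(qy, ry) \<in> T" by auto
    with T(2) show "(qy, rx) \<in> T" unfolding saturated_def by blast
  qed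
qed

lemma Sat_mono: "S \<subseteq> T \<Longrightarrow> Sat S \<subseteq> Sat T"
  using Sat_least[OF _ Sat_saturated, of S T] Sat_sub[of T] by blast

lemma Sat_image:
  "(\<lambda>(q, r). (f q, g r)) ` Sat S \<subseteq> Sat ((\<lambda>(q, r). (f q, g r)) ` S)"
proof -
  define h where "h = (\<lambda>(q, r). (f q, g r))"
  define U where "U = Sat (h ` S)"
  define P where "P = {p. h p \<in> U}"
  have hh: "h (a, b) = (f a, g b)" for a b unfolding h_def by simp
  have sU: "saturated U" unfolding U_def by (rule Sat_saturated)
  have "saturated P"
    unfolding saturated_def
  proof (intro allI impI)
    fix qx qy rx ry
    assume a: "(qx, rx) \<in> P \<and> (qx, ry) \<in> P \<and> (qy, ry) \<in> P"
    hence "(f qx, g rx) \<in> U" "(f qx, g ry) \<in> U" "(f qy, g ry) \<in> U"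
      unfolding P_def by (auto simp: hh)
    hence "(f qy, g rx) \<in> U" using sU unfolding saturated_def by blast
    thus "(qy, rx) \<in> P" unfolding P_def by (simp add: hh)
  qed
  moreover have "S \<subseteq> P" unfolding P_def U_def using Sat_sub[of "h ` S"] by blast
  ultimately have "Sat S \<subseteq> P" by (simp add: Sat_least)
  hence "h ` Sat S \<subseteq> U" unfolding P_def by blast
  thus ?thesis unfolding h_def U_def .
qed

lemma final_Sat:
  assumes "X \<subseteq> T" "T \<subseteq> Sat X"
  shows "D_final FB FC (j, T) \<longleftrightarrow> D_final FB FC (j', X)"
proof
  assume "D_final FB FC (j', X)" thus "D_final FB FC (j, T)"
    using assms unfolding D_final_def by auto
next
  assume a: "D_final FB FC (j, T)"
  show "D_final FB FC (j', X)"
  proof (rule ccontr)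
    assume n: "\<not> ?thesis"
    let ?G = "{(q, r). (q \<in> FB) = (r \<in> FC)}"
    have "X \<subseteq> ?G" using n unfolding D_final_def by auto
    moreover have "saturated ?G" unfolding saturated_def by auto
    ultimately have "Sat X \<subseteq> ?G" by (rule Sat_least)
    with assms a show False unfolding D_final_def by auto
  qed
qed

lemma run_Cons: "D_run dA FA dB q0 dC r0 st (a # w) = D_run dA FA dB q0 dC r0 (D_step dA FA dB q0 dC r0 st a) w"
  by (simp add: D_run_def)

lemma step_eq: "D_step dA FA dB q0 dC r0 (i, T) a =
  (dA i a, if dA i a \<in> FA then insert (q0, r0) ((\<lambda>(q, r). (dB q a, dC r a)) ` T) else (\<lambda>(q, r). (dB q a, dC r a)) ` T)"
  by (simp add: D_step_def Let_def)

lemma run_inv: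
  assumes "X \<subseteq> T" "T \<subseteq> Sat X"
  shows "\<exists>j T' X'. D_run dA FA dB q0 dC r0 (i, T) w = (j, T') \<and>
     D_run dA FA dB q0 dC r0 (i, X) w = (j, X') \<and> X' \<subseteq> T' \<and> T' \<subseteq> Sat X'"
  using assms
proof (induction w arbitrary: i T X)
  case Nil
  then show ?case by (simp add: D_run_def)
next
  case (Cons a w)
  let ?h = "\<lambda>(q, r). (dB q a, dC r a)"
  have i1: "?h ` X \<subseteq> ?h ` T" using Cons.prems(1) by (rule image_mono)
  have i2: "?h ` T \<subseteq> Sat (?h ` X)"
    by (rule order_trans[OF image_mono[OF Cons.prems(2)] Sat_image])
  define T2 where "T2 = (if dA i a \<in> FA then insert (q0, r0) (?h ` T) else ?h ` T)"
  define X2 where "X2 = (if dA i a \<in> FA then insert (q0, r0) (?h ` X) else ?h ` X)"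
  have s1: "?h ` X \<subseteq> X2" unfolding X2_def by (simp add: subset_insertI)
  have i3: "?h ` T \<subseteq> Sat X2" using i2 Sat_mono[OF s1] by (rule order_trans)
  have j1: "X2 \<subseteq> T2"
  proof (cases "dA i a \<in> FA")
    case True thus ?thesis unfolding X2_def T2_def using insert_mono[OF i1] True by simp
  next
    case False thus ?thesis unfolding X2_def T2_def using i1 by simp
  qed
  have j2: "T2 \<subseteq> Sat X2"
  proof (cases "dA i a \<in> FA")
    case True
    have "(q0, r0) \<in> X2" unfolding X2_def using True by simp
    hence "(q0, r0) \<in> Sat X2" using Sat_sub by blast
    with i3 True show ?thesis unfolding T2_def by simp
  next
    case False thus ?thesis unfolding T2_def using i3 by simp
  qed
  have e1: "D_run dA FA dB q0 dC r0 (i, T) (a # w) = D_run dA FA dB q0 dC r0 (dA i a, T2) w"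
    unfolding run_Cons step_eq T2_def ..
  have e2: "D_run dA FA dB q0 dC r0 (i, X) (a # w) = D_run dA FA dB q0 dC r0 (dA i a, X2) w"
    unfolding run_Cons step_eq X2_def ..
  show ?case unfolding e1 e2 by (rule Cons.IH[OF j1 j2])
qed

theorem lemma5:
  fixes Alph :: "'s set"
    and QA :: "'qa set" and iA :: 'qa and FA :: "'qa set" and dA :: "'qa \<Rightarrow> 's \<Rightarrow> 'qa"
    and QB :: "'qb set" and q0 :: 'qb and FB :: "'qb set" and dB :: "'qb \<Rightarrow> 's \<Rightarrow> 'qb"
    and QC :: "'qc set" and r0 :: 'qc and FC :: "'qc set" and dC :: "'qc \<Rightarrow> 's \<Rightarrow> 'qc"
    and i :: 'qa and S :: "('qb \<times> 'qc) set"
  assumes "complete_dfa Alph QA iA FA dA"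
    and "complete_dfa Alph QB q0 FB dB"
    and "complete_dfa Alph QC r0 FC dC"
    and "i \<in> QA"
    and "S \<subseteq> QB \<times> QC"
  shows "D_equiv Alph dA FA dB q0 FB dC r0 FC (i, Sat S) (i, S)"
  unfolding D_equiv_def
proof
  fix w assume "w \<in> lists Alph"
  obtain j T' X' where h1: "D_run dA FA dB q0 dC r0 (i, Sat S) w = (j, T')"
     and h2: "D_run dA FA dB q0 dC r0 (i, S) w = (j, X')" and h3: "X' \<subseteq> T'" and h4: "T' \<subseteq> Sat X'"
    using run_inv[OF Sat_sub[of S] order_refl, of dA FA dB q0 dC r0 i w] by blast
  show "D_final FB FC (D_run dA FA dB q0 dC r0 (i, Sat S) w) =
        D_final FB FC (D_run dA FA dB q0 dC r0 (i, S) w)"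
    unfolding h1 h2 by (rule final_Sat[OF h3 h4])
qed

end
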